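(* Let $N = 2^L$ with $L \ge 1$ an integer, let $M, Y \in \mathbb{N}$, and let $r_0, r_1, \ldots, r_{L-1} \in \mathbb{N}_{>0}$. Consider parameters $\mathbf{a}^{0,j,\gamma} \in \mathbb{R}^M$ for $j \in [N]$, $\gamma \in [r_0]$; $\mathbf{a}^{l,j,\gamma} \in \mathbb{R}^{r_{l-1}}$ for $l \in [L-1]$, $j \in [N/2^l]$, $\gamma \in [r_l]$; and $\mathbf{a}^{L,y} \in \mathbb{R}^{r_{L-1}}$ for $y \in [Y]$. From these define recursively $$\phi^{1,j,\gamma} = \sum_{\alpha=1}^{r_0} a^{1,j,\gamma}_\alpha\, \mathbf{a}^{0,2j-1,\alpha} \otimes \mathbf{a}^{0,2j,\alpha}, \qquad j\in[N/2],\ \gamma\in[r_1],$$ $$\phi^{l,j,\gamma} = \sum_{\alpha=1}^{r_{l-1}} a^{l,j,\gamma}_\alpha\, \phi^{l-1,2j-1,\alpha} \otimes \phi^{l-1,2j,\alpha}, \qquad 2\le l\le L-1,\ j\in[N/2^l],\ \gamma\in[r_l],$$ $$\mathcal{A}^y = \sum_{\alpha=1}^{r_{L-1}} a^{L,y}_\alpha\, \phi^{L-1,1,\alpha} \otimes \phi^{L-1,2,\alpha}, \qquad y\in[Y],$$ (when $L=1$, $\mathcal{A}^y=\sum_{\alpha=1}^{r_0}a^{1,y}_\alpha\,\mathbf{a}^{0,1,\alpha}\otimes\mathbf{a}^{0,2,\alpha}$), so that each $\mathcal{A}^y$ is a tensor of order $N$ with dimension $M$ in each mode. Let $r := \min\{r_0,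 M\}$ and fix $y\in[Y]$. Then, in the Euclidean space of all parameter configurations $\{\mathbf{a}^{l,j,\gamma}\}_{l,j,\gamma}$ (all the parameters above), the set of configurations for which the CP-rank of $\mathcal{A}^y$ is less than $r^{N/2}$ has Lebesgue measure zero. The same conclusion holds in the "shared" setting: if one imposes $\mathbf{a}^{l,j,\gamma} = \mathbf{a}^{l,\gamma}$ for all $j$ (for each $l \in \{0,\ldots,L-1\}$ and $\gamma \in [r_l]$), and considers the Euclidean space of configurations of $\{\mathbf{a}^{l,\gamma}\}_{l,\gamma}$ together with $\{\mathbf{a}^{L,y}\}_y$, then the set of configurations for which the CP-rank of $\mathcal{A}^y$ is less than $r^{N/2}$ has Lebesgue measure zero.
   Context: For $k\in\mathbb{N}$, $[k]=\{1,\ldots,k\}$. The tensor product of tensors $\mathcal{A}$ (order $P$) and $\mathcal{B}$ (order $Q$) is the order-$(P+Q)$ tensor $(\mathcal{A}\otimes\mathcal{B})_{d_1\ldots d_{P+Q}} = \mathcal{A}_{d_1\ldots d_P}\mathcal{B}_{d_{P+1}\ldots d_{P+Q}}$. The CP-rank of a tensor $\mathcal{A}$ of order $N$ is the minimal $Z$ such that $\mathcal{A} = \sum_{z=1}^Z \mathbf{v}^{(1)}_z \otimes \cdots \otimes \mathbf{v}^{(N)}_z$ for some vectors $\mathbf{v}^{(i)}_z$. For a vector $\mathbf{a}$, $a_\alpha$ denotes its $\alpha$-th entry. Measure is Lebesgue measure on the Euclidean parameter space. *)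

theory Defs
  imports "HOL-Analysis.Analysis"
begin

text \<open>Tensors of order n with dimension M in each mode are represented as functions
  on index lists ds (length n, entries in {1..M}); values outside are irrelevant.\<close>

definition tprod :: "nat \<Rightarrow> (nat list \<Rightarrow> real) \<Rightarrow> (nat list \<Rightarrow> real) \<Rightarrow> (nat list \<Rightarrow> real)" where
  "tprod P A B = (\<lambda>ds. A (take P ds) * B (drop P ds))"

definition cp_rank :: "nat \<Rightarrow> nat \<Rightarrow> (nat list \<Rightarrow> real) \<Rightarrow> nat" where
  "cp_rank n M A = (LEAST Z. \<exists>v :: nat \<Rightarrow> nat \<Rightarrow> nat \<Rightarrow> real.
      \<forall>ds. length ds = n \<and> set ds \<subseteq> {1..M} \<longrightarrow>
        A ds = (\<Sum>z<Z. \<Prod>i<n. v z i (ds ! i)))"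

text \<open>Number of "gamma" indices at level l: r l for l < L, Y at level L
  (the output weights a^{L,y} are encoded as a^{L,1,y}).\<close>
definition width :: "nat \<Rightarrow> (nat \<Rightarrow> nat) \<Rightarrow> nat \<Rightarrow> nat \<Rightarrow> nat" where
  "width L r Y l = (if l = L then Y else r l)"

definition vlen :: "nat \<Rightarrow> (nat \<Rightarrow> nat) \<Rightarrow> nat \<Rightarrow> nat" where
  "vlen M r l = (if l = 0 then M else r (l - 1))"

text \<open>phi p l j g is the order-2^l tensor phi^{l,j,g}; phi p 0 j g is the vector a^{0,j,g}.
  A parameter configuration p maps (l,j,g,alpha) to the alpha-th entry of a^{l,j,g}.\<close>
fun phi :: "(nat \<Rightarrow> nat) \<Rightarrow> (nat \<times> nat \<times> nat \<times> nat \<Rightarrow> real) \<Rightarrow> nat \<Rightarrow> nat \<Rightarrow> nat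
             \<Rightarrow> (nat list \<Rightarrow> real)" where
  "phi r p 0 j g = (\<lambda>ds. p (0, j, g, hd ds))"
| "phi r p (Suc l) j g = (\<lambda>ds. \<Sum>\<alpha>\<in>{1..r l}.
      p (Suc l, j, g, \<alpha>) * tprod (2 ^ l) (phi r p l (2 * j - 1) \<alpha>) (phi r p l (2 * j) \<alpha>) ds)"

definition param_idx :: "nat \<Rightarrow> nat \<Rightarrow> (nat \<Rightarrow> nat) \<Rightarrow> nat \<Rightarrow> (nat \<times> nat \<times> nat \<times> nat) set" where
  "param_idx L M r Y = {(l, j, g, \<alpha>). l \<le> L \<and> j \<in> {1 .. 2 ^ L div 2 ^ l}
      \<and> g \<in> {1 .. width L r Y l} \<and> \<alpha> \<in> {1 .. vlen M r l}}"

definition shared_idx :: "nat \<Rightarrow> nat \<Rightarrow> (nat \<Rightarrow> nat) \<Rightarrow> nat \<Rightarrow> (nat \<times> nat \<times> nat) set" where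
  "shared_idx L M r Y = {(l, g, \<alpha>). l \<le> L \<and> g \<in> {1 .. width L r Y l} \<and> \<alpha> \<in> {1 .. vlen M r l}}"

definition unshare :: "(nat \<times> nat \<times> nat \<Rightarrow> real) \<Rightarrow> (nat \<times> nat \<times> nat \<times> nat \<Rightarrow> real)" where
  "unshare q = (\<lambda>(l, j, g, \<alpha>). q (l, g, \<alpha>))"

end

theory Submission
  imports Defs "HOL-Computational_Algebra.Polynomial" "Jordan_Normal_Form.Determinant"
begin


inductive polyfun :: "'i set \<Rightarrow> (('i \<Rightarrow> real) \<Rightarrow> real) \<Rightarrow> bool" for I where
  pf_const: "polyfun I (\<lambda>x. c)"
| pf_var: "i \<in> I \<Longrightarrow> polyfun I (\<lambda>x. x i)"
| pf_add: "polyfun I f \<Longrightarrow> polyfun I g \<Longrightarrow> polyfun I (\<lambda>x. f x + g x)"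
| pf_mult: "polyfun I f \<Longrightarrow> polyfun I g \<Longrightarrow> polyfun I (\<lambda>x. f x * g x)"

lemma pf_sum: "finite S \<Longrightarrow> (\<And>s. s \<in> S \<Longrightarrow> polyfun I (f s)) \<Longrightarrow> polyfun I (\<lambda>x. \<Sum>s\<in>S. f s x)"
  by (induction S rule: finite_induct) (auto intro: polyfun.intros)

lemma pf_prod: "finite S \<Longrightarrow> (\<And>s. s \<in> S \<Longrightarrow> polyfun I (f s)) \<Longrightarrow> polyfun I (\<lambda>x. \<Prod>s\<in>S. f s x)"
  by (induction S rule: finite_induct) (auto intro: polyfun.intros)

lemma pf_dep: "polyfun I f \<Longrightarrow> (\<And>i. i \<in> I \<Longrightarrow> x i = y i) \<Longrightarrow> f x = f y"
  by (induction rule: polyfun.induct) auto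

lemma pf_measurable: "polyfun I f \<Longrightarrow> f \<in> borel_measurable (PiM I (\<lambda>_. lborel))"
  by (induction rule: polyfun.induct) auto

lemma pf_split:
  assumes "polyfun (insert i I) f"
  shows "\<exists>P. (\<forall>k. polyfun I (\<lambda>x. coeff (P x) k)) \<and> (\<forall>x. f x = poly (P x) (x i))"
  using assms
proof (induction rule: polyfun.induct)
  case (pf_const c)
  show ?case
    by (rule exI[of _ "\<lambda>x. [:c:]"]) (auto simp: coeff_pCons split: nat.splits intro: polyfun.pf_const)
next
  case (pf_var j)
  show ?case
  proof (cases "j = i")
    case True
    then show ?thesis
      by (intro exI[of _ "\<lambda>x. [:0, 1:]"]) (auto simp: coeff_pCons split: nat.splits intro: polyfun.pf_const)
  next
    case False
    with pf_var have j: "j \<in> I" by auto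
    have "polyfun I (\<lambda>x. coeff [:x j:] k)" for k
      by (cases k) (auto intro: polyfun.intros j)
    then show ?thesis by (intro exI[of _ "\<lambda>x. [:x j:]"]) auto
  qed
next
  case (pf_add f g)
  then obtain P Q where "\<forall>k. polyfun I (\<lambda>x. coeff (P x) k)" "\<forall>x. f x = poly (P x) (x i)"
    "\<forall>k. polyfun I (\<lambda>x. coeff (Q x) k)" "\<forall>x. g x = poly (Q x) (x i)" by blast
  then show ?case
    by (intro exI[of _ "\<lambda>x. P x + Q x"]) (auto intro: polyfun.intros)
next
  case (pf_mult f g)
  then obtain P Q where PQ: "\<forall>k. polyfun I (\<lambda>x. coeff (P x) k)" "\<forall>x. f x = poly (P x) (x i)"
    "\<forall>k. polyfun I (\<lambda>x. coeff (Q x) k)" "\<forall>x. g x = poly (Q x) (x i)" by blast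
  have "polyfun I (\<lambda>x. coeff (P x * Q x) k)" for k
    unfolding coeff_mult by (rule pf_sum) (auto intro: polyfun.pf_mult PQ[rule_format])
  then show ?case using PQ
    by (intro exI[of _ "\<lambda>x. P x * Q x"]) auto
qed

lemma pf_null:
  assumes "finite I" "polyfun I f" "x0 \<in> space (PiM I (\<lambda>_. lborel))" "f x0 \<noteq> 0"
  shows "{x \<in> space (PiM I (\<lambda>_. lborel)). f x = 0} \<in> null_sets (PiM I (\<lambda>_. lborel))"
  using assms
proof (induction I arbitrary: f x0 rule: finite_induct)
  case empty
  have e: "{x \<in> space (PiM {} (\<lambda>_. lborel)). f x = 0} = {}"
    using empty by (auto simp: space_PiM_empty)
  show ?case unfolding e by simp
next
  case (insert i I)
  interpret product_sigma_finite "\<lambda>_. lborel" by standard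
  obtain P where P: "\<And>k. polyfun I (\<lambda>x. coeff (P x) k)" "\<And>x. f x = poly (P x) (x i)"
    using pf_split[OF insert.prems(1)] by blast
  have Pdep: "P x = P y" if "\<And>j. j \<in> I \<Longrightarrow> x j = y j" for x y
    using pf_dep[OF P(1) that] by (simp add: poly_eq_iff)
  define x0' where "x0' = restrict x0 I"
  have x0': "x0' \<in> space (PiM I (\<lambda>_. lborel))"
    using insert.prems by (auto simp: space_PiM x0'_def)
  have "P x0 \<noteq> 0" using insert.prems P(2) by auto
  then obtain k where "coeff (P x0) k \<noteq> 0" by (auto simp: poly_eq_iff)
  moreover have "P x0' = P x0" by (rule Pdep) (auto simp: x0'_def)
  ultimately have k: "coeff (P x0') k \<noteq> 0" by simp
  have N: "{x \<in> space (PiM I (\<lambda>_. lborel)). coeff (P x) k = 0} \<in> null_sets (PiM I (\<lambda>_. lborel))"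
    by (rule insert.IH[OF P(1) x0' k])
  let ?Z = "{x \<in> space (PiM (insert i I) (\<lambda>_. lborel)). f x = 0}"
  have fm: "f \<in> borel_measurable (PiM (insert i I) (\<lambda>_. lborel))"
    by (rule pf_measurable[OF insert.prems(1)])
  have Zm: "?Z \<in> sets (PiM (insert i I) (\<lambda>_. lborel))"
    using fm by measurable
  have "emeasure (PiM (insert i I) (\<lambda>_. lborel)) ?Z
      = (\<integral>\<^sup>+ x. indicator ?Z x \<partial>PiM (insert i I) (\<lambda>_. lborel))"
    using Zm by simp
  also have "\<dots> = (\<integral>\<^sup>+ x. (\<integral>\<^sup>+ y. indicator ?Z (x(i := y)) \<partial>lborel) \<partial>PiM I (\<lambda>_. lborel))"
    using insert.hyps Zm by (subst product_nn_integral_insert) auto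
  finally have E1: "emeasure (PiM (insert i I) (\<lambda>_. lborel)) ?Z = (\<integral>\<^sup>+ x. (\<integral>\<^sup>+ y. indicator ?Z (x(i := y)) \<partial>lborel) \<partial>PiM I (\<lambda>_. lborel))" .
  have AEz: "AE x in PiM I (\<lambda>_. lborel). (\<integral>\<^sup>+ y. indicator ?Z (x(i := y)) \<partial>lborel) = 0"
  proof -
    have "AE x in PiM I (\<lambda>_. lborel). x \<notin> {x \<in> space (PiM I (\<lambda>_. lborel)). coeff (P x) k = 0}"
      using N by (rule AE_not_in)
    then show ?thesis
    proof (rule AE_mp[OF _ AE_I2], intro impI)
      fix x assume x: "x \<in> space (PiM I (\<lambda>_. lborel))"
        and nx: "x \<notin> {x \<in> space (PiM I (\<lambda>_. lborel)). coeff (P x) k = 0}"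
      then have Px: "P x \<noteq> 0" by auto
      have "P (x(i := y)) = P x" for y
        by (rule Pdep) (use insert.hyps in auto)
      then have "indicator ?Z (x(i := y)) = (indicator {y. poly (P x) y = 0} y :: ennreal)" for y
        using x P(2)[of "x(i := y)"] by (auto simp: space_PiM indicator_def PiE_def extensional_def)
      then have "(\<integral>\<^sup>+ y. indicator ?Z (x(i := y)) \<partial>lborel) = emeasure lborel {y. poly (P x) y = 0}"
        using poly_roots_finite[OF Px] by (simp add: finite_imp_closed borel_closed)
      also have "\<dots> = 0"
        using countable_imp_null_set_lborel[OF countable_finite[OF poly_roots_finite[OF Px]]] by auto
      finally show "(\<integral>\<^sup>+ y. indicator ?Z (x(i := y)) \<partial>lborel) = 0" .
    qed
  qed
  have "(\<integral>\<^sup>+ x. (\<integral>\<^sup>+ y. indicator ?Z (x(i := y)) \<partial>lborel) \<partial>PiM I (\<lambda>_. lborel)) = 0"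
    using nn_integral_cong_AE[OF AEz] by simp
  with E1 show ?case using Zm by auto
qed



definition PhiT :: "nat \<Rightarrow> nat \<Rightarrow> nat list set \<Rightarrow> (nat \<times> nat \<times> nat \<Rightarrow> real) \<Rightarrow> (nat list \<Rightarrow> real)" where
  "PhiT Z n D w = (\<lambda>ds. if ds \<in> D then \<Sum>z<Z. \<Prod>i<n. w (z, i, ds ! i) else 0)"

lemma PhiT_cont: "continuous_on UNIV (PhiT Z n D)"
  unfolding PhiT_def
  apply (intro continuous_on_coordinatewise_then_product)
  subgoal for ds by (cases "ds \<in> D") (auto intro!: continuous_intros continuous_on_product_coordinates)
  done

lemma compact_box: "compact {w :: nat \<times> nat \<times> nat \<Rightarrow> real. \<forall>x. \<bar>w x\<bar> \<le> m}"
proof -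
  have "{w :: nat \<times> nat \<times> nat \<Rightarrow> real. \<forall>x. \<bar>w x\<bar> \<le> m} = PiE UNIV (\<lambda>_. {-m..m})"
    by (simp add: set_eq_iff PiE_UNIV_domain Pi_iff abs_le_iff; metis minus_le_iff)
  moreover have "compactin (product_topology (\<lambda>_. euclidean) UNIV) (PiE UNIV (\<lambda>_::nat \<times> nat \<times> nat. {-m..(m::real)}))"
    by (subst compactin_PiE) auto
  ultimately show ?thesis by (simp add: euclidean_product_topology)
qed

lemma PhiT_range_borel:
  assumes "\<And>ds. ds \<in> D \<Longrightarrow> length ds = n \<and> set ds \<subseteq> {1..M}"
  shows "range (PhiT Z n D) \<in> sets borel"
proof -
  let ?B = "\<lambda>m::nat. {w :: nat \<times> nat \<times> nat \<Rightarrow> real. \<forall>x. \<bar>w x\<bar> \<le> real m}"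
  have eq: "range (PhiT Z n D) = (\<Union>m. PhiT Z n D ` ?B m)"
  proof (intro equalityI subsetI)
    fix T assume "T \<in> range (PhiT Z n D)"
    then obtain w where T: "T = PhiT Z n D w" by auto
    define w' where "w' = (\<lambda>(z,i,d). if z < Z \<and> i < n \<and> d \<le> M then w (z,i,d) else 0)"
    define S where "S = (\<Sum>z<Z. \<Sum>i<n. \<Sum>d\<le>M. \<bar>w (z,i,d)\<bar>)"
    have "\<bar>w' x\<bar> \<le> S" for x
    proof -
      obtain z i d where x: "x = (z,i,d)" by (cases x) auto
      show ?thesis
      proof (cases "z < Z \<and> i < n \<and> d \<le> M")
        case True
        have "\<bar>w (z,i,d)\<bar> \<le> (\<Sum>d\<le>M. \<bar>w (z,i,d)\<bar>)"
          using True by (intro member_le_sum) auto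
        also have "\<dots> \<le> (\<Sum>i<n. \<Sum>d\<le>M. \<bar>w (z,i,d)\<bar>)"
          using True by (intro member_le_sum[where f="\<lambda>i. \<Sum>d\<le>M. \<bar>w (z,i,d)\<bar>"]) (auto intro: sum_nonneg)
        also have "\<dots> \<le> S" unfolding S_def
          using True by (intro member_le_sum[where f="\<lambda>z. \<Sum>i<n. \<Sum>d\<le>M. \<bar>w (z,i,d)\<bar>"]) (auto intro: sum_nonneg)
        finally show ?thesis using True by (simp add: x w'_def)
      next
        case False
        then show ?thesis using False by (auto simp: x w'_def S_def sum_nonneg)
      qed
    qed
    then have "w' \<in> ?B (nat \<lceil>S\<rceil>)"
      by (auto intro: order_trans[OF _ real_nat_ceiling_ge])
    moreover have "PhiT Z n D w' = T"
      unfolding T PhiT_def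
    proof (intro ext)
      fix ds show "(if ds \<in> D then \<Sum>z<Z. \<Prod>i<n. w' (z, i, ds ! i) else 0) =
         (if ds \<in> D then \<Sum>z<Z. \<Prod>i<n. w (z, i, ds ! i) else 0)"
      proof (cases "ds \<in> D")
        case True
        then have "ds ! i \<le> M" if "i < n" for i
          using assms[OF True] that by (auto dest!: nth_mem)
        then show ?thesis using True by (auto simp: w'_def intro!: sum.cong prod.cong)
      qed simp
    qed
    ultimately show "T \<in> (\<Union>m. PhiT Z n D ` ?B m)" by blast
  qed auto
  have "PhiT Z n D ` ?B m \<in> sets borel" for m
    by (intro borel_closed compact_imp_closed compact_continuous_image
        continuous_on_subset[OF PhiT_cont] compact_box) auto
  then show ?thesis unfolding eq by auto
qed



definition dig :: "nat \<Rightarrow> nat \<Rightarrow> nat \<Rightarrow> nat" where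
  "dig b k t = k div b ^ t mod b"

lemma dig_Suc: "dig b k (Suc t) = dig b (k div b) t"
  by (simp add: dig_def div_mult2_eq mult.commute)

lemma dig_0: "dig b k 0 = k mod b" by (simp add: dig_def)

lemma dig_lt: "b > 0 \<Longrightarrow> dig b k t < b" by (simp add: dig_def)

lemma dig_inj: "b > 0 \<Longrightarrow> k < b ^ n \<Longrightarrow> k' < b ^ n \<Longrightarrow> (\<And>t. t < n \<Longrightarrow> dig b k t = dig b k' t) \<Longrightarrow> k = k'"
proof (induction n arbitrary: k k')
  case 0 then show ?case by simp
next
  case (Suc n)
  have "k div b < b ^ n" "k' div b < b ^ n"
    using Suc.prems by (auto simp: less_mult_imp_div_less mult.commute)
  moreover have "dig b (k div b) t = dig b (k' div b) t" if "t < n" for t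
    using Suc.prems(4)[of "Suc t"] that by (simp add: dig_Suc)
  ultimately have "k div b = k' div b" using Suc.IH Suc.prems(1) by blast
  moreover have "k mod b = k' mod b" using Suc.prems(4)[of 0] by (simp add: dig_0)
  ultimately show ?case by (metis div_mult_mod_eq)
qed

lemma dig_surj: "b > 0 \<Longrightarrow> (\<And>t. t < n \<Longrightarrow> f t < b) \<Longrightarrow> \<exists>k < b ^ n. \<forall>t < n. dig b k t = f t"
proof (induction n arbitrary: f)
  case 0 then show ?case by simp
next
  case (Suc n)
  obtain k where k: "k < b ^ n" "\<forall>t<n. dig b k t = f (Suc t)"
    using Suc.IH[of "\<lambda>t. f (Suc t)"] Suc.prems by auto
  define k' where "k' = f 0 + b * k"
  have f0: "f 0 < b" using Suc.prems by auto
  have "k' < b ^ Suc n"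
  proof -
    have "k' < b + b * k" using f0 by (simp add: k'_def)
    also have "\<dots> = b * (k + 1)" by simp
    also have "\<dots> \<le> b * b ^ n" using k(1) by (intro mult_le_mono2) auto
    finally show ?thesis by simp
  qed
  moreover have "dig b k' t = f t" if "t < Suc n" for t
  proof (cases t)
    case 0 then show ?thesis using f0 by (simp add: dig_0 k'_def)
  next
    case (Suc t')
    have "k' div b = k" using f0 Suc.prems(1) by (simp add: k'_def)
    then show ?thesis using Suc k(2) that by (simp add: dig_Suc)
  qed
  ultimately show ?case by blast
qed

lemma cp_exists:
  assumes "n \<ge> 1"
  shows "\<exists>Z v. \<forall>ds. length ds = n \<and> set ds \<subseteq> {1..M} \<longrightarrow>
           A ds = (\<Sum>z<Z. \<Prod>i<n. (v :: nat \<Rightarrow> nat \<Rightarrow> nat \<Rightarrow> real) z i (ds ! i))"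
proof -
  define B where "B = Suc M"
  define dec where "dec z = map (\<lambda>i. dig B z i) [0..<n]" for z
  define v where "v z i d = (if d = dig B z i then (if i = 0 then A (dec z) else 1) else 0)" for z i d
  have "A ds = (\<Sum>z<B ^ n. \<Prod>i<n. v z i (ds ! i))" if ds: "length ds = n" "set ds \<subseteq> {1..M}" for ds
  proof -
    have lt: "ds ! t < B" if "t < n" for t
      using ds that by (auto simp: B_def dest!: nth_mem)
    obtain z0 where z0: "z0 < B ^ n" "\<forall>t<n. dig B z0 t = ds ! t"
      using dig_surj[of B n "\<lambda>t. ds ! t"] lt by (auto simp: B_def)
    have dz0: "dec z0 = ds" using z0 ds by (auto simp: dec_def intro!: nth_equalityI)
    have "(\<Prod>i<n. v z i (ds ! i)) = (if z = z0 then A ds else 0)" if z: "z < B ^ n" for z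
    proof (cases "z = z0")
      case True
      have "(\<Prod>i<n. v z i (ds ! i)) = (\<Prod>i<n. if i = 0 then A ds else 1)"
        using True z0 dz0 by (intro prod.cong) (auto simp: v_def)
      also have "\<dots> = A ds" using assms by (simp add: prod.delta)
      finally show ?thesis using True by simp
    next
      case False
      then obtain t where t: "t < n" "dig B z t \<noteq> ds ! t"
        using dig_inj[where b=B and n=n and k=z and k'=z0] z z0 by (auto simp: B_def)
      then have "v z t (ds ! t) = 0" by (auto simp: v_def)
      then have "(\<Prod>i<n. v z i (ds ! i)) = 0" using t(1) by (intro prod_zero) auto
      then show ?thesis using False by simp
    qed
    then have "(\<Sum>z<B ^ n. \<Prod>i<n. v z i (ds ! i)) = (\<Sum>z<B ^ n. if z = z0 then A ds else 0)"
      by (intro sum.cong) auto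
    also have "\<dots> = A ds" using z0 by (simp add: sum.delta)
    finally show ?thesis by simp
  qed
  then show ?thesis by blast
qed

lemma cp_rank_lt:
  assumes "n \<ge> 1" "cp_rank n M A < K"
  shows "\<exists>Z<K. \<exists>v :: nat \<Rightarrow> nat \<Rightarrow> nat \<Rightarrow> real. \<forall>ds. length ds = n \<and> set ds \<subseteq> {1..M} \<longrightarrow>
           A ds = (\<Sum>z<Z. \<Prod>i<n. v z i (ds ! i))"
proof -
  let ?P = "\<lambda>Z. \<exists>v :: nat \<Rightarrow> nat \<Rightarrow> nat \<Rightarrow> real. \<forall>ds. length ds = n \<and> set ds \<subseteq> {1..M} \<longrightarrow>
           A ds = (\<Sum>z<Z. \<Prod>i<n. v z i (ds ! i))"
  have "?P (cp_rank n M A)" unfolding cp_rank_def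
    by (rule LeastI_ex) (use cp_exists[OF assms(1)] in blast)
  then show ?thesis using assms(2) by blast
qed

lemma cp_rank_lt_iff:
  assumes "n \<ge> 1"
  shows "cp_rank n M A < K \<longleftrightarrow> (\<exists>Z<K. \<exists>v :: nat \<Rightarrow> nat \<Rightarrow> nat \<Rightarrow> real. \<forall>ds. length ds = n \<and> set ds \<subseteq> {1..M} \<longrightarrow>
           A ds = (\<Sum>z<Z. \<Prod>i<n. v z i (ds ! i)))"
proof
  assume "\<exists>Z<K. \<exists>v :: nat \<Rightarrow> nat \<Rightarrow> nat \<Rightarrow> real. \<forall>ds. length ds = n \<and> set ds \<subseteq> {1..M} \<longrightarrow>
           A ds = (\<Sum>z<Z. \<Prod>i<n. v z i (ds ! i))"
  then obtain Z where "Z < K" "\<exists>v :: nat \<Rightarrow> nat \<Rightarrow> nat \<Rightarrow> real. \<forall>ds. length ds = n \<and> set ds \<subseteq> {1..M} \<longrightarrow>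
           A ds = (\<Sum>z<Z. \<Prod>i<n. v z i (ds ! i))" by blast
  then obtain Z v where Zv: "Z < K" "\<forall>ds. length ds = n \<and> set ds \<subseteq> {1..M} \<longrightarrow>
           A ds = (\<Sum>z<Z. \<Prod>i<n. (v :: nat \<Rightarrow> nat \<Rightarrow> nat \<Rightarrow> real) z i (ds ! i))" by blast
  have "cp_rank n M A \<le> Z" unfolding cp_rank_def
    by (rule Least_le) (use Zv(2) in blast)
  then show "cp_rank n M A < K" using Zv(1) by simp
qed (rule cp_rank_lt[OF assms])

lemma prod_even_odd: fixes h :: nat shows "(\<Prod>i<2*h. f i) = (\<Prod>t<h. f (2*t) * f (2*t+1))"
proof (induction h)
  case 0 then show ?case by simp
next
  case (Suc h)
  have "2 * Suc h = Suc (Suc (2*h))" by simp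
  then show ?case using Suc by (simp add: mult.assoc)
qed

definition ilv :: "nat \<Rightarrow> nat \<Rightarrow> nat \<Rightarrow> nat \<Rightarrow> nat list" where
  "ilv b h k k' = map (\<lambda>i. if even i then dig b k (i div 2) + 1 else dig b k' (i div 2) + 1) [0..<2*h]"

lemma ilv_length[simp]: "length (ilv b h k k') = 2 * h" by (simp add: ilv_def)

lemma ilv_nth_even: "t < h \<Longrightarrow> ilv b h k k' ! (2*t) = dig b k t + 1" by (simp add: ilv_def)
lemma ilv_nth_odd: "t < h \<Longrightarrow> ilv b h k k' ! Suc (2*t) = dig b k' t + 1" by (simp add: ilv_def)

lemma ilv_set: "0 < b \<Longrightarrow> b \<le> M \<Longrightarrow> set (ilv b h k k') \<subseteq> {1..M}"
proof -
  assume b: "0 < b" "b \<le> M"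
  have "Suc (dig b k t) \<le> M" for k t using dig_lt[OF b(1), of k t] b(2) by simp
  then show ?thesis by (auto simp: ilv_def)
qed

lemma minor_zero:
  fixes A :: "nat list \<Rightarrow> real"
  assumes Z: "Z < K" and b: "0 < b" "b \<le> M"
    and dec: "\<forall>ds. length ds = 2*h \<and> set ds \<subseteq> {1..M} \<longrightarrow> A ds = (\<Sum>z<Z. \<Prod>i<2*h. v z i (ds ! i))"
  shows "det (mat K K (\<lambda>(k,k'). A (ilv b h k k'))) = 0"
proof -
  define U where "U = mat K K (\<lambda>(k,z). if z < Z then \<Prod>t<h. v z (2*t) (dig b k t + 1) else 0)"
  define V where "V = mat K K (\<lambda>(z,k'). if z < Z then \<Prod>t<h. v z (2*t+1) (dig b k' t + 1) else 0)"
  have U: "U \<in> carrier_mat K K" and V: "V \<in> carrier_mat K K" by (auto simp: U_def V_def)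
  have eq: "mat K K (\<lambda>(k,k'). A (ilv b h k k')) = U * V"
  proof (rule eq_matI)
    fix k k' assume kk: "k < dim_row (U * V)" "k' < dim_col (U * V)"
    then have k: "k < K" "k' < K" using U V by auto
    have "(U * V) $$ (k, k') = (\<Sum>z\<in>{0..<K}. U $$ (k, z) * V $$ (z, k'))"
      using U V k by (simp add: index_mult_mat scalar_prod_def)
    also have "\<dots> = (\<Sum>z\<in>{0..<K}. if z < Z then (\<Prod>t<h. v z (2*t) (dig b k t + 1)) * (\<Prod>t<h. v z (2*t+1) (dig b k' t + 1)) else 0)"
      using k by (intro sum.cong) (auto simp: U_def V_def)
    also have "\<dots> = (\<Sum>z<Z. (\<Prod>t<h. v z (2*t) (dig b k t + 1)) * (\<Prod>t<h. v z (2*t+1) (dig b k' t + 1)))"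
    proof -
      have "{..<K} \<inter> {z. z < Z} = {..<Z}" using Z by auto
      then show ?thesis by (simp add: sum.If_cases atLeast0LessThan)
    qed
    also have "\<dots> = (\<Sum>z<Z. \<Prod>i<2*h. v z i (ilv b h k k' ! i))"
    proof (rule sum.cong[OF refl])
      fix z
      have "(\<Prod>i<2*h. v z i (ilv b h k k' ! i)) = (\<Prod>t<h. v z (2*t) (ilv b h k k' ! (2*t)) * v z (Suc (2*t)) (ilv b h k k' ! Suc (2*t)))"
        by (simp only: prod_even_odd Suc_eq_plus1)
      also have "\<dots> = (\<Prod>t<h. v z (2*t) (dig b k t + 1) * v z (Suc (2*t)) (dig b k' t + 1))"
        by (rule prod.cong[OF refl]) (simp only: lessThan_iff ilv_nth_even ilv_nth_odd)
      also have "\<dots> = (\<Prod>t<h. v z (2*t) (dig b k t + 1)) * (\<Prod>t<h. v z (2*t+1) (dig b k' t + 1))"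
        by (simp only: prod.distrib Suc_eq_plus1)
      finally show "(\<Prod>t<h. v z (2*t) (dig b k t + 1)) * (\<Prod>t<h. v z (2*t+1) (dig b k' t + 1)) = (\<Prod>i<2*h. v z i (ilv b h k k' ! i))" by simp
    qed
    also have "\<dots> = A (ilv b h k k')"
      using dec ilv_set[OF b] by simp
    finally show "mat K K (\<lambda>(k,k'). A (ilv b h k k')) $$ (k, k') = (U * V) $$ (k, k')"
      using k by simp
  qed (use U V in auto)
  have "det V = 0"
  proof -
    have P0: "(\<Prod>i = 0..<K. V $$ (i, p i)) = 0" if p: "p permutes {0..<K}" for p
    proof (rule prod_zero)
      have "K - 1 \<in> {0..<K}" using Z by auto
      then have "p (K - 1) \<in> {0..<K}" using permutes_in_image[OF p] by blast
      then have "p (K - 1) < K" by simp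
      then show "\<exists>i\<in>{0..<K}. V $$ (i, p i) = 0"
        using Z by (intro bexI[of _ "K - 1"]) (auto simp: V_def)
    qed simp
    show ?thesis unfolding det_def'[OF V] by (intro sum.neutral) (simp add: P0)
  qed
  then show ?thesis unfolding eq det_mult[OF U V] by simp
qed



lemma pow_div2: "l \<le> L \<Longrightarrow> (2::nat) ^ L div 2 ^ l = 2 ^ (L - l)"
  by (simp add: power_diff)

lemma child_range:
  assumes "Suc l \<le> L" "j \<in> {1..(2::nat) ^ L div 2 ^ Suc l}"
  shows "2 * j - 1 \<in> {1..(2::nat) ^ L div 2 ^ l}" "2 * j \<in> {1..(2::nat) ^ L div 2 ^ l}"
proof -
  have e1: "(2::nat) ^ L div 2 ^ Suc l = 2 ^ (L - Suc l)" using assms pow_div2 by blast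
  have e2: "(2::nat) ^ L div 2 ^ l = 2 * 2 ^ (L - Suc l)" using assms
    by (simp add: pow_div2 Suc_diff_Suc[symmetric] del: Suc_diff_Suc)
  show "2 * j - 1 \<in> {1..(2::nat) ^ L div 2 ^ l}" "2 * j \<in> {1..(2::nat) ^ L div 2 ^ l}"
    using assms(2) unfolding e1 e2 by auto
qed

lemma phi_pf:
  assumes H: "\<forall>idx\<in>param_idx L M r Y. polyfun J (\<lambda>q. H q idx)"
  shows "l \<le> L \<Longrightarrow> j \<in> {1..2^L div 2^l} \<Longrightarrow> g \<in> {1..width L r Y l} \<Longrightarrow> length ds = 2^l
    \<Longrightarrow> set ds \<subseteq> {1..M} \<Longrightarrow> polyfun J (\<lambda>q. phi r (H q) l j g ds)"
proof (induction l arbitrary: j g ds)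
  case 0
  then have "ds \<noteq> []" by auto
  then have "hd ds \<in> {1..M}" using 0 hd_in_set by blast
  then have "(0, j, g, hd ds) \<in> param_idx L M r Y"
    using 0 by (auto simp: param_idx_def vlen_def)
  then show ?case using H by simp
next
  case (Suc l)
  have lL: "l < L" using Suc by simp
  have "polyfun J (\<lambda>q. \<Sum>\<alpha>\<in>{1..r l}. H q (Suc l, j, g, \<alpha>) *
      (phi r (H q) l (2 * j - 1) \<alpha> (take (2^l) ds) * phi r (H q) l (2 * j) \<alpha> (drop (2^l) ds)))"
  proof (intro pf_sum pf_mult)
    fix \<alpha> assume a: "\<alpha> \<in> {1..r l}"
    then show "polyfun J (\<lambda>q. H q (Suc l, j, g, \<alpha>))"
      using H Suc.prems by (auto simp: param_idx_def vlen_def)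
    have aw: "\<alpha> \<in> {1..width L r Y l}" using a lL by (simp add: width_def)
    have st: "set (take (2^l) ds) \<subseteq> {1..M}" "set (drop (2^l) ds) \<subseteq> {1..M}"
      using Suc.prems(5) by (auto dest: in_set_takeD in_set_dropD)
    show "polyfun J (\<lambda>q. phi r (H q) l (2 * j - 1) \<alpha> (take (2^l) ds))"
      by (rule Suc.IH) (use lL child_range[OF Suc.prems(1,2)] aw st Suc.prems(4) in auto)
    show "polyfun J (\<lambda>q. phi r (H q) l (2 * j) \<alpha> (drop (2^l) ds))"
      by (rule Suc.IH) (use lL child_range[OF Suc.prems(1,2)] aw st Suc.prems(4) in auto)
  qed simp
  then show ?case by (simp add: tprod_def)
qed

definition p0 :: "nat \<times> nat \<times> nat \<times> nat \<Rightarrow> real" where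
  "p0 = (\<lambda>(l, j, g, \<alpha>). if l = 0 then (if \<alpha> = g then 1 else 0) else if l = 1 then 1
          else (if \<alpha> = 1 then 1 else 0))"

lemma split_all2: fixes n :: nat shows "(\<forall>t<2*n. P t) \<longleftrightarrow> (\<forall>t<n. P t) \<and> (\<forall>t<n. P (n + t))"
proof
  assume "\<forall>t<2*n. P t" then show "(\<forall>t<n. P t) \<and> (\<forall>t<n. P (n + t))" by auto
next
  assume H: "(\<forall>t<n. P t) \<and> (\<forall>t<n. P (n + t))"
  show "\<forall>t<2*n. P t"
  proof (intro allI impI)
    fix t :: nat assume t: "t < 2 * n"
    show "P t"
    proof (cases "t < n")
      case True with H show ?thesis by auto
    next
      case False
      then have "t = n + (t - n)" "t - n < n" using t by auto
      then show ?thesis using H by metis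
    qed
  qed
qed

lemma ind_mult: "(if a then 1 else 0) * (if b then 1 else 0) = (if a \<and> b then 1 else (0::real))"
  by simp

lemma phi_p0:
  assumes P: "\<forall>idx\<in>param_idx L M r Y. p idx = p0 idx" and rpos: "\<forall>l<L. r l > 0"
  shows "1 \<le> l \<Longrightarrow> l \<le> L \<Longrightarrow> j \<in> {1..2^L div 2^l} \<Longrightarrow> g \<in> {1..width L r Y l} \<Longrightarrow> length ds = 2^l
    \<Longrightarrow> set ds \<subseteq> {1..M} \<Longrightarrow> phi r p l j g ds =
      (if \<forall>t<2^(l-1). ds ! (2*t) = ds ! (2*t+1) \<and> ds ! (2*t) \<le> r 0 then 1 else 0)"
proof (induction l arbitrary: j g ds)
  case 0 then show ?case by simp
next
  case (Suc l)
  have lL: "l < L" using Suc by simp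
  have pidx: "p (Suc l, j, g, \<alpha>) = p0 (Suc l, j, g, \<alpha>)" if "\<alpha> \<in> {1..r l}" for \<alpha>
    using P Suc.prems that by (auto simp: param_idx_def vlen_def)
  have st: "set (take (2^l) ds) \<subseteq> {1..M}" "set (drop (2^l) ds) \<subseteq> {1..M}"
    using Suc.prems(6) by (auto dest: in_set_takeD in_set_dropD)
  have ch: "2 * j - 1 \<in> {1..2 ^ L div 2 ^ l}" "2 * j \<in> {1..2 ^ L div 2 ^ l}"
    using child_range[OF Suc.prems(2,3)] by auto
  have phiS: "phi r p (Suc l) j g ds = (\<Sum>\<alpha>\<in>{1..r l}. p0 (Suc l, j, g, \<alpha>) *
      (phi r p l (2 * j - 1) \<alpha> (take (2^l) ds) * phi r p l (2 * j) \<alpha> (drop (2^l) ds)))"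
    by (simp add: tprod_def pidx)
  show ?case
  proof (cases "l = 0")
    case True
    have len: "length ds = 2" using Suc.prems True by simp
    have d0: "ds ! 0 \<ge> 1" using Suc.prems(6) len nth_mem[of 0 ds] by force
    have "phi r p (Suc l) j g ds = (\<Sum>\<alpha>\<in>{1..r 0}. (if \<alpha> = ds ! 0 then (if ds ! 1 = ds ! 0 then 1 else 0) else 0))"
    proof -
      have "p (0, j', \<alpha>, d) = p0 (0, j', \<alpha>, d)" if "j' \<in> {1..2 ^ L div 2 ^ 0}" "\<alpha> \<in> {1..r 0}" "d \<in> {1..M}" for j' \<alpha> d
        using P that lL True by (auto simp: param_idx_def vlen_def width_def)
      moreover have "hd (take 1 ds) = ds ! 0" "hd (drop 1 ds) = ds ! 1" "ds ! 0 \<in> {1..M}" "ds ! 1 \<in> {1..M}"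
      proof -
        have ne: "ds \<noteq> []" using len by auto
        have m: "ds ! 0 \<in> set ds" "ds ! 1 \<in> set ds" using len by (simp_all add: nth_mem)
        show "ds ! 0 \<in> {1..M}" "ds ! 1 \<in> {1..M}"
          using subsetD[OF Suc.prems(6) m(1)] subsetD[OF Suc.prems(6) m(2)] by auto
        show "hd (take 1 ds) = ds ! 0" "hd (drop 1 ds) = ds ! 1"
          using ne len by (auto simp: hd_conv_nth)
      qed
      ultimately show ?thesis unfolding phiS using True ch
        by (intro sum.cong refl) (auto simp: p0_def)
    qed
    also have "\<dots> = (if ds ! 0 = ds ! 1 \<and> ds ! 0 \<le> r 0 then 1 else 0)"
      using d0 by (subst sum.delta) auto
    finally show ?thesis using True by simp
  next
    case False
    have r1: "1 \<in> {1..r l}" using rpos lL by auto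
    have "phi r p (Suc l) j g ds = (\<Sum>\<alpha>\<in>{1..r l}. (if \<alpha> = 1 then
      (phi r p l (2 * j - 1) \<alpha> (take (2^l) ds) * phi r p l (2 * j) \<alpha> (drop (2^l) ds)) else 0))"
      unfolding phiS using False by (intro sum.cong refl) (auto simp: p0_def)
    also have "\<dots> = phi r p l (2 * j - 1) 1 (take (2^l) ds) * phi r p l (2 * j) 1 (drop (2^l) ds)"
      using r1 by (subst sum.delta) auto
    also have "\<dots> = (if \<forall>t<2^(l-1). take (2^l) ds ! (2*t) = take (2^l) ds ! (2*t+1) \<and> take (2^l) ds ! (2*t) \<le> r 0 then 1 else 0)
                  * (if \<forall>t<2^(l-1). drop (2^l) ds ! (2*t) = drop (2^l) ds ! (2*t+1) \<and> drop (2^l) ds ! (2*t) \<le> r 0 then 1 else 0)"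
    proof -
      have w1: "1 \<in> {1..width L r Y l}" using r1 lL by (simp add: width_def)
      show ?thesis
        using Suc.IH[OF _ _ ch(1) w1 _ st(1)] Suc.IH[OF _ _ ch(2) w1 _ st(2)] False lL Suc.prems(5)
        by simp
    qed
    also have "\<dots> = (if \<forall>t<2^l. ds ! (2*t) = ds ! (2*t+1) \<and> ds ! (2*t) \<le> r 0 then 1 else 0)"
    proof -
      define n :: nat where "n = 2 ^ (l - 1)"
      have n2: "2 ^ l = 2 * n" using False by (simp add: n_def power_Suc[symmetric] del: power_Suc)
      define Q where "Q xs t = (xs ! (2*t) = xs ! (2*t+1) \<and> xs ! (2*t) \<le> r 0)" for xs :: "nat list" and t
      have le: "2 * n \<le> length ds" using n2 Suc.prems(5) by simp
      have A: "Q (take (2^l) ds) t = Q ds t" if "t < n" for t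
        using that n2 by (simp add: Q_def)
      have B: "Q (drop (2^l) ds) t = Q ds (n + t)" if "t < n" for t
        using that unfolding n2 Q_def nth_drop[OF le] by (simp add: algebra_simps)
      have C: "(\<forall>t<2^l. Q ds t) \<longleftrightarrow> (\<forall>t<n. Q (take (2^l) ds) t) \<and> (\<forall>t<n. Q (drop (2^l) ds) t)"
        unfolding split_all2[of n "Q ds", folded n2] using A B by auto
      have C': "(\<forall>t<2^l. ds ! (2*t) = ds ! (2*t+1) \<and> ds ! (2*t) \<le> r 0) \<longleftrightarrow>
         (\<forall>t<2^(l-1). take (2^l) ds ! (2*t) = take (2^l) ds ! (2*t+1) \<and> take (2^l) ds ! (2*t) \<le> r 0) \<and>
         (\<forall>t<2^(l-1). drop (2^l) ds ! (2*t) = drop (2^l) ds ! (2*t+1) \<and> drop (2^l) ds ! (2*t) \<le> r 0)"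
        using C unfolding Q_def n_def .
      show ?thesis unfolding C' ind_mult by (rule refl)
    qed
    finally show ?thesis by simp
  qed
qed



lemma main_generic:
  fixes J :: "'i set" and H :: "('i \<Rightarrow> real) \<Rightarrow> nat \<times> nat \<times> nat \<times> nat \<Rightarrow> real" and qz :: "'i \<Rightarrow> real"
    and L M Y y :: nat and r :: "nat \<Rightarrow> nat"
  assumes L: "L \<ge> 1" and rpos: "\<forall>l<L. r l > 0" and y: "y \<in> {1..Y}"
    and fin: "finite J" and Hpf: "\<forall>idx\<in>param_idx L M r Y. polyfun J (\<lambda>q. H q idx)"
    and qz: "qz \<in> space (PiM J (\<lambda>_. lborel))" and Hq0: "\<forall>idx\<in>param_idx L M r Y. H qz idx = p0 idx"
  shows "{q \<in> space (PiM J (\<lambda>_. lborel)). cp_rank (2^L) M (phi r (H q) L 1 y) < (min (r 0) M) ^ (2^L div 2)}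
          \<in> null_sets (PiM J (\<lambda>_. lborel))"
proof -
  define R where "R = min (r 0) M"
  define h :: nat where "h = 2 ^ L div 2"
  have hL: "h = 2 ^ (L - 1)" using L unfolding h_def
    by (metis One_nat_def Suc_diff_le diff_Suc_1 nonzero_mult_div_cancel_left power_Suc zero_neq_numeral)
  have N: "(2::nat) ^ L = 2 * h" using L unfolding hL
    by (metis One_nat_def Suc_diff_le diff_Suc_1 power_Suc)
  have hpos: "h \<ge> 1" unfolding hL by simp
  define K where "K = R ^ h"
  let ?MJ = "PiM J (\<lambda>_. lborel)"
  let ?S = "{q \<in> space ?MJ. cp_rank (2^L) M (phi r (H q) L 1 y) < K}"
  show ?thesis
  proof (cases "R = 0")
    case True
    then have "K = 0" using hpos by (simp add: K_def)
    then have e: "?S = {}" by simp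
    show ?thesis unfolding R_def[symmetric] h_def[symmetric] K_def[symmetric] e by simp
  next
    case False
    then have R: "0 < R" "R \<le> M" "R \<le> r 0" by (auto simp: R_def)
    have nL1: "2 ^ L \<ge> (1::nat)" by simp
    have ilv_valid: "length (ilv R h k k') = 2 ^ L" "set (ilv R h k k') \<subseteq> {1..M}" for k k'
      using N ilv_set[OF R(1,2)] by auto
    have j1: "(1::nat) \<in> {1..2 ^ L div 2 ^ L}" by simp
    have yw: "y \<in> {1..width L r Y L}" using y by (simp add: width_def)
    define Dt where "Dt q = det (mat K K (\<lambda>(k,k'). phi r (H q) L 1 y (ilv R h k k')))" for q
    have entry_pf: "polyfun J (\<lambda>q. phi r (H q) L 1 y (ilv R h k k'))" for k k'
      by (rule phi_pf[OF Hpf order_refl j1 yw ilv_valid])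
    have Dt_pf: "polyfun J Dt"
    proof -
      have "polyfun J (\<lambda>q. \<Sum>p \<in> {p. p permutes {0..<K}}. signof p *
          (\<Prod>i = 0..<K. mat K K (\<lambda>(k,k'). phi r (H q) L 1 y (ilv R h k k')) $$ (i, p i)))"
      proof (intro pf_sum pf_mult pf_prod)
        show "finite {p. p permutes {0..<K}}" by (simp add: finite_permutations)
        fix p i assume p: "p \<in> {p. p permutes {0..<K}}" and i: "i \<in> {0..<K}"
        then have "p i < K" using permutes_in_image[of p "{0..<K}" i] by auto
        then have "(\<lambda>q. mat K K (\<lambda>(k,k'). phi r (H q) L 1 y (ilv R h k k')) $$ (i, p i)) =
                   (\<lambda>q. phi r (H q) L 1 y (ilv R h i (p i)))" using i by auto
        then show "polyfun J (\<lambda>q. mat K K (\<lambda>(k,k'). phi r (H q) L 1 y (ilv R h k k')) $$ (i, p i))"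
          using entry_pf by simp
      qed (auto intro: pf_const)
      then show ?thesis unfolding Dt_def by (subst det_def'[OF mat_carrier]) simp
    qed
    have Dt_q0: "Dt qz = 1"
    proof -
      have "mat K K (\<lambda>(k,k'). phi r (H qz) L 1 y (ilv R h k k')) = 1\<^sub>m K"
      proof (rule eq_matI)
        fix k k' assume "k < dim_row (1\<^sub>m K)" "k' < dim_col (1\<^sub>m K)"
        then have k: "k < K" "k' < K" by auto
        have "phi r (H qz) L 1 y (ilv R h k k') =
          (if \<forall>t<2^(L-1). ilv R h k k' ! (2*t) = ilv R h k k' ! (2*t+1) \<and> ilv R h k k' ! (2*t) \<le> r 0 then 1 else 0)"
          by (rule phi_p0[OF Hq0 rpos L order_refl j1 yw ilv_valid])
        also have "(\<forall>t<2^(L-1). ilv R h k k' ! (2*t) = ilv R h k k' ! (2*t+1) \<and> ilv R h k k' ! (2*t) \<le> r 0)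
            \<longleftrightarrow> (\<forall>t<h. dig R k t = dig R k' t)"
        proof -
          have dr: "Suc (dig R a t) \<le> r 0" for a t using dig_lt[OF R(1), of a t] R(3) by simp
          show ?thesis unfolding hL[symmetric] using dr by (auto simp: ilv_nth_even ilv_nth_odd)
        qed
        also have "\<dots> \<longleftrightarrow> k = k'"
          using dig_inj[where b=R and n=h and k=k and k'=k'] R(1) k by (auto simp: K_def)
        finally show "mat K K (\<lambda>(k,k'). phi r (H qz) L 1 y (ilv R h k k')) $$ (k, k') = 1\<^sub>m K $$ (k, k')"
          using k by simp
      qed auto
      then show ?thesis unfolding Dt_def by simp
    qed
    have sub: "?S \<subseteq> {q \<in> space ?MJ. Dt q = 0}"
    proof safe
      fix q assume q: "q \<in> space ?MJ" and c: "cp_rank (2^L) M (phi r (H q) L 1 y) < K"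
      obtain Z v where Zv: "Z < K" "\<forall>ds. length ds = 2^L \<and> set ds \<subseteq> {1..M} \<longrightarrow>
           phi r (H q) L 1 y ds = (\<Sum>z<Z. \<Prod>i<2^L. v z i (ds ! i))"
        using cp_rank_lt[OF nL1 c] by blast
      show "Dt q = 0" unfolding Dt_def
        by (rule minor_zero[OF Zv(1) R(1,2), where v=v]) (use Zv(2) N in simp)
    qed
    have null: "{q \<in> space ?MJ. Dt q = 0} \<in> null_sets ?MJ"
      by (rule pf_null[OF fin Dt_pf qz]) (simp add: Dt_q0)
    define D where "D = {ds :: nat list. length ds = 2^L \<and> set ds \<subseteq> {1..M}}"
    define Tens where "Tens q = (\<lambda>ds. if ds \<in> D then phi r (H q) L 1 y ds else 0)" for q
    have Tm: "Tens \<in> measurable ?MJ (PiM UNIV (\<lambda>_. borel))"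
      unfolding Tens_def
    proof (rule measurable_PiM_single')
      fix ds :: "nat list"
      show "(\<lambda>q. if ds \<in> D then phi r (H q) L 1 y ds else 0) \<in> borel_measurable ?MJ"
      proof (cases "ds \<in> D")
        case True
        then have "polyfun J (\<lambda>q. phi r (H q) L 1 y ds)"
          by (intro phi_pf[OF Hpf order_refl j1 yw]) (auto simp: D_def)
        then show ?thesis using True pf_measurable by simp
      qed simp
    qed simp
    have Tm': "Tens \<in> borel_measurable ?MJ"
    proof -
      have eqm: "measurable ?MJ (PiM UNIV (\<lambda>_. borel)) = measurable ?MJ (borel :: (nat list \<Rightarrow> real) measure)"
        by (rule measurable_cong_sets[OF refl sets_PiM_equal_borel])
      show ?thesis using Tm unfolding eqm .
    qed
    have eqS: "?S = (\<Union>Z\<in>{..<K}. Tens -` range (PhiT Z (2^L) D) \<inter> space ?MJ)"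
    proof -
      have X: "Tens q \<in> range (PhiT Z (2^L) D) \<longleftrightarrow> (\<exists>v :: nat \<Rightarrow> nat \<Rightarrow> nat \<Rightarrow> real. \<forall>ds. length ds = 2^L \<and> set ds \<subseteq> {1..M} \<longrightarrow>
           phi r (H q) L 1 y ds = (\<Sum>z<Z. \<Prod>i<2^L. v z i (ds ! i)))" for q Z
      proof
        assume "Tens q \<in> range (PhiT Z (2^L) D)"
        then obtain w where w: "Tens q = PhiT Z (2^L) D w" by auto
        show "\<exists>v :: nat \<Rightarrow> nat \<Rightarrow> nat \<Rightarrow> real. \<forall>ds. length ds = 2^L \<and> set ds \<subseteq> {1..M} \<longrightarrow>
           phi r (H q) L 1 y ds = (\<Sum>z<Z. \<Prod>i<2^L. v z i (ds ! i))"
        proof (intro exI allI impI)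
          fix ds assume "length ds = 2^L \<and> set ds \<subseteq> {1..M}"
          then have "ds \<in> D" by (simp add: D_def)
          then show "phi r (H q) L 1 y ds = (\<Sum>z<Z. \<Prod>i<2^L. (\<lambda>z i d. w (z, i, d)) z i (ds ! i))"
            using fun_cong[OF w, of ds] by (simp add: Tens_def PhiT_def)
        qed
      next
        assume "\<exists>v :: nat \<Rightarrow> nat \<Rightarrow> nat \<Rightarrow> real. \<forall>ds. length ds = 2^L \<and> set ds \<subseteq> {1..M} \<longrightarrow>
           phi r (H q) L 1 y ds = (\<Sum>z<Z. \<Prod>i<2^L. v z i (ds ! i))"
        then obtain v :: "nat \<Rightarrow> nat \<Rightarrow> nat \<Rightarrow> real" where v: "\<forall>ds. length ds = 2^L \<and> set ds \<subseteq> {1..M} \<longrightarrow>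
           phi r (H q) L 1 y ds = (\<Sum>z<Z. \<Prod>i<2^L. v z i (ds ! i))" by blast
        have "Tens q = PhiT Z (2^L) D (\<lambda>(z,i,d). v z i d)"
          using v by (auto simp: Tens_def PhiT_def D_def)
        then show "Tens q \<in> range (PhiT Z (2^L) D)" by blast
      qed
      show ?thesis
      proof (rule Set.set_eqI)
        fix q
        show "q \<in> ?S \<longleftrightarrow> q \<in> (\<Union>Z\<in>{..<K}. Tens -` range (PhiT Z (2^L) D) \<inter> space ?MJ)"
          unfolding mem_Collect_eq UN_iff Int_iff vimage_eq lessThan_iff cp_rank_lt_iff[OF nL1] X by blast
      qed
    qed
    have Sm: "?S \<in> sets ?MJ"
      unfolding eqS
    proof (intro sets.finite_UN)
      fix Z show "Tens -` range (PhiT Z (2^L) D) \<inter> space ?MJ \<in> sets ?MJ"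
        by (rule measurable_sets[OF Tm' PhiT_range_borel]) (auto simp: D_def)
    qed simp
    show ?thesis unfolding R_def[symmetric] h_def[symmetric] K_def[symmetric]
      by (rule null_sets_subset[OF null Sm sub])
  qed
qed



lemma param_idx_finite: "finite (param_idx L M r Y)"
proof -
  have "param_idx L M r Y = (SIGMA l:{..L}. SIGMA j:{1..2^L div 2^l}. SIGMA g:{1..width L r Y l}. {1..vlen M r l})"
    by (auto simp: param_idx_def)
  then show ?thesis by simp
qed

lemma shared_idx_finite: "finite (shared_idx L M r Y)"
proof -
  have "shared_idx L M r Y = (SIGMA l:{..L}. SIGMA g:{1..width L r Y l}. {1..vlen M r l})"
    by (auto simp: shared_idx_def)
  then show ?thesis by simp
qed

theorem theorem1:
  fixes L M Y y :: nat and r :: "nat \<Rightarrow> nat"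
  assumes "L \<ge> 1"
    and "\<And>l. l < L \<Longrightarrow> r l > 0"
    and "y \<in> {1..Y}"
  shows "{p \<in> space (PiM (param_idx L M r Y) (\<lambda>_. lborel)).
            cp_rank (2 ^ L) M (phi r p L 1 y) < (min (r 0) M) ^ (2 ^ L div 2)}
          \<in> null_sets (PiM (param_idx L M r Y) (\<lambda>_. lborel))
       \<and> {q \<in> space (PiM (shared_idx L M r Y) (\<lambda>_. lborel)).
            cp_rank (2 ^ L) M (phi r (unshare q) L 1 y) < (min (r 0) M) ^ (2 ^ L div 2)}
          \<in> null_sets (PiM (shared_idx L M r Y) (\<lambda>_. lborel))"
proof
  have rpos: "\<forall>l<L. r l > 0" using assms(2) by blast
  show "{p \<in> space (PiM (param_idx L M r Y) (\<lambda>_. lborel)).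
            cp_rank (2 ^ L) M (phi r p L 1 y) < (min (r 0) M) ^ (2 ^ L div 2)}
          \<in> null_sets (PiM (param_idx L M r Y) (\<lambda>_. lborel))"
  proof (rule main_generic[where H="\<lambda>p. p" and qz="restrict p0 (param_idx L M r Y)", OF assms(1) rpos assms(3) param_idx_finite])
    show "\<forall>idx\<in>param_idx L M r Y. polyfun (param_idx L M r Y) (\<lambda>q. q idx)"
      by (auto intro: pf_var)
    show "restrict p0 (param_idx L M r Y) \<in> space (PiM (param_idx L M r Y) (\<lambda>_. lborel))"
      by (simp add: space_PiM)
    show "\<forall>idx\<in>param_idx L M r Y. restrict p0 (param_idx L M r Y) idx = p0 idx"
      by simp
  qed
  define q0 where "q0 = restrict (\<lambda>(l, g, \<alpha>). p0 (l, 0, g, \<alpha>)) (shared_idx L M r Y)"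
  show "{q \<in> space (PiM (shared_idx L M r Y) (\<lambda>_. lborel)).
            cp_rank (2 ^ L) M (phi r (unshare q) L 1 y) < (min (r 0) M) ^ (2 ^ L div 2)}
          \<in> null_sets (PiM (shared_idx L M r Y) (\<lambda>_. lborel))"
  proof (rule main_generic[where H="unshare" and qz=q0, OF assms(1) rpos assms(3) shared_idx_finite])
    have mem: "(l, g, \<alpha>) \<in> shared_idx L M r Y" if "(l, j, g, \<alpha>) \<in> param_idx L M r Y" for l j g \<alpha>
      using that by (auto simp: param_idx_def shared_idx_def)
    show "\<forall>idx\<in>param_idx L M r Y. polyfun (shared_idx L M r Y) (\<lambda>q. unshare q idx)"
    proof
      fix idx assume "idx \<in> param_idx L M r Y"
      moreover obtain l j g \<alpha> where "idx = (l, j, g, \<alpha>)" by (cases idx) auto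
      ultimately show "polyfun (shared_idx L M r Y) (\<lambda>q. unshare q idx)"
        using mem by (auto simp: unshare_def intro: pf_var)
    qed
    show "q0 \<in> space (PiM (shared_idx L M r Y) (\<lambda>_. lborel))"
      by (simp add: space_PiM q0_def)
    show "\<forall>idx\<in>param_idx L M r Y. unshare q0 idx = p0 idx"
    proof
      fix idx assume "idx \<in> param_idx L M r Y"
      moreover obtain l j g \<alpha> where "idx = (l, j, g, \<alpha>)" by (cases idx) auto
      ultimately show "unshare q0 idx = p0 idx"
        using mem by (auto simp: unshare_def q0_def p0_def)
    qed
  qed
qed


end
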